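(* Let $N\ge 1$ be an integer and let $q$ satisfy one of the following: (i) $q$ is real with $q>0$; or (ii) $q=e^{i\pi\varphi}$ with $0<\varphi<\frac{1}{2N}$. Let $\pi_N:U_q(su(2))\to \mathrm{End}(V_N)$ be the $(N+1)$-dimensional irreducible representation, equipped with the Hilbert space structure making it a unitary ($*$-)representation for the star structure $H^*=H$, $(X^\pm)^*=X^\mp$. Let $\mathcal{S}^2_{q,N}:=\mathrm{End}(V_N)$, with involution $f\mapsto f^*$ the Hilbert space adjoint, and for $r>0$ define the integral $$\int f := \frac{4\pi r^2}{[N+1]_q}\,\mathrm{Tr}\big(f\,\pi_N(q^{H})\big),\qquad f\in \mathcal{S}^2_{q,N}.$$ Then for every $f\in\mathcal{S}^2_{q,N}$: in case (i), $\overline{\int f}=\int f^*$; in case (ii), $\overline{\int f}=\int f^*\,\pi_N(q^{-2H})$. (Here the bar denotes complex conjugation.)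
   Context: $U_q(su(2))$ is the algebra generated by $H,X^+,X^-$ with relations $[H,X^\pm]=\pm 2X^\pm$, $[X^+,X^-]=[H]_q:=\frac{q^H-q^{-H}}{q-q^{-1}}$; $q$-numbers are $[n]_q=\frac{q^n-q^{-n}}{q-q^{-1}}$. Its Hopf structure is $\Delta(H)=H\otimes1+1\otimes H$, $\Delta(X^\pm)=X^\pm\otimes q^{H/2}+q^{-H/2}\otimes X^\pm$, $S(H)=-H$, $S(X^\pm)=-q^{\pm1}X^\pm$, $\varepsilon(H)=\varepsilon(X^\pm)=0$. On $V_N$, $q^{H}$ acts diagonally in a weight basis, by $q^m$ on a vector of $H$-weight $m$. Under the stated assumptions on $q$, $V_N$ admits an inner product for which $\pi_N(u^* )=\pi_N(u)^\dagger$. The algebra $\mathcal{S}^2_{q,N}$ is the $q$-deformed fuzzy sphere (it is generated by the images of the $U_q(su(2))$ generators). *)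

theory Defs
  imports Complex_Main "Jordan_Normal_Form.Matrix"
begin

definition qnum :: "complex \<Rightarrow> nat \<Rightarrow> complex" where
  "qnum q n = (if q = 1 then of_nat n else (q ^ n - inverse q ^ n) / (q - inverse q))"

text \<open>V_N = C^(N+1) with its orthonormal weight basis e_0..e_N; e_k has H-weight N - 2k.
  In this basis (which is orthonormal for the inner product making pi_N a *-representation),
  pi_N(H) is diagonal and pi_N(q^(aH)) acts by q^(a m) on weight-m vectors.\<close>
definition weight :: "nat \<Rightarrow> nat \<Rightarrow> int" where
  "weight N k = int N - 2 * int k"

definition pi_H :: "nat \<Rightarrow> complex mat" where
  "pi_H N = mat (N+1) (N+1) (\<lambda>(i,j). if i = j then of_int (weight N i) else 0)"

definition pi_qH :: "nat \<Rightarrow> complex \<Rightarrow> int \<Rightarrow> complex mat" where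
  "pi_qH N q a = mat (N+1) (N+1) (\<lambda>(i,j). if i = j then q powi (a * weight N i) else 0)"

definition adj :: "complex mat \<Rightarrow> complex mat" where
  "adj f = mat (dim_col f) (dim_row f) (\<lambda>(i,j). cnj (f $$ (j,i)))"

definition tr :: "complex mat \<Rightarrow> complex" where
  "tr f = (\<Sum>i<dim_row f. f $$ (i,i))"

definition qint :: "complex \<Rightarrow> nat \<Rightarrow> real \<Rightarrow> complex mat \<Rightarrow> complex" where
  "qint q N r f = (4 * of_real pi * of_real (r^2) / qnum q (N+1)) * tr (f * pi_qH N q 1)"

end

theory Submission
  imports Defs
begin

lemma diag_entry:
  assumes g: "g \<in> carrier_mat (N+1) (N+1)" and i: "i < N+1"
  shows "(g * pi_qH N q a) $$ (i,i) = g $$ (i,i) * q powi (a * weight N i)"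
proof -
  have "(g * pi_qH N q a) $$ (i,i) = (\<Sum>k<N+1. g $$ (i,k) * (if k = i then q powi (a * weight N k) else 0))"
    using g i by (simp add: pi_qH_def scalar_prod_def atLeast0LessThan)
  also have "\<dots> = (\<Sum>k<N+1. if k = i then g $$ (i,k) * q powi (a * weight N k) else 0)"
    by (rule sum.cong) auto
  also have "\<dots> = g $$ (i,i) * q powi (a * weight N i)"
    using i by (simp add: sum.delta)
  finally show ?thesis .
qed

lemma tr_formula:
  assumes g: "g \<in> carrier_mat (N+1) (N+1)"
  shows "tr (g * pi_qH N q a) = (\<Sum>i<N+1. g $$ (i,i) * q powi (a * weight N i))"
  using g unfolding tr_def by (auto intro!: sum.cong simp: diag_entry)

lemma qint_cnj:
  assumes "cnj (qnum q (N+1)) = qnum q (N+1)"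
  shows "cnj (qint q N r f) = (4 * of_real pi * of_real (r^2) / qnum q (N+1)) * cnj (tr (f * pi_qH N q 1))"
  using assms unfolding qint_def by simp

theorem mainTheorem1:
  fixes N :: nat and q :: complex and r :: real and f :: "complex mat"
  assumes "N \<ge> 1" and "r > 0" and "f \<in> carrier_mat (N+1) (N+1)"
  shows "((\<exists>x::real. x > 0 \<and> q = of_real x) \<longrightarrow>
            cnj (qint q N r f) = qint q N r (adj f))
       \<and> ((\<exists>\<phi>::real. 0 < \<phi> \<and> \<phi> < 1 / (2 * real N) \<and> q = exp (\<i> * of_real (pi * \<phi>))) \<longrightarrow>
            cnj (qint q N r f) = qint q N r (adj f * pi_qH N q (-2)))"
proof (intro conjI impI)
  have f: "f \<in> carrier_mat (N+1) (N+1)" by fact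
  have af: "adj f \<in> carrier_mat (N+1) (N+1)" using f by (simp add: adj_def)
  have adiag: "\<And>i. i < N+1 \<Longrightarrow> adj f $$ (i,i) = cnj (f $$ (i,i))" using f by (simp add: adj_def)
  {
    assume "\<exists>x::real. x > 0 \<and> q = of_real x"
    then obtain x :: real where x: "x > 0" "q = of_real x" by blast
    have cq: "cnj q = q" using x by simp
    have qn: "cnj (qnum q (N+1)) = qnum q (N+1)"
      unfolding qnum_def using cq by (simp add: complex_cnj_power_int)
    show "cnj (qint q N r f) = qint q N r (adj f)"
      unfolding qint_cnj[OF qn] unfolding qint_def tr_formula[OF f] tr_formula[OF af]
      using cq by (simp add: adiag)
  }
  {
    assume "\<exists>\<phi>::real. 0 < \<phi> \<and> \<phi> < 1 / (2 * real N) \<and> q = exp (\<i> * of_real (pi * \<phi>))"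
    then obtain t :: real where t: "q = exp (\<i> * of_real t)" by blast
    have qc: "q = cis t" using t by (simp add: cis_conv_exp)
    have cq: "cnj q = inverse q" using qc by (simp add: cis_cnj)
    have q0: "q \<noteq> 0" using qc by simp
    have qn: "cnj (qnum q (N+1)) = qnum q (N+1)"
    proof -
      have "\<And>a b c d :: complex. (a - b) / (c - d) = (b - a) / (d - c)"
        by (metis minus_diff_eq minus_divide_divide)
      then show ?thesis unfolding qnum_def using cq q0 by simp
    qed
    have afm: "adj f * pi_qH N q (-2) \<in> carrier_mat (N+1) (N+1)" using af by (simp add: pi_qH_def)
    have e: "\<And>i. i < N+1 \<Longrightarrow> (adj f * pi_qH N q (-2)) $$ (i,i) * q powi (1 * weight N i)
              = cnj (f $$ (i,i) * q powi (1 * weight N i))"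
    proof -
      fix i assume i: "i < N+1"
      have "q powi (-2 * weight N i) * q powi (weight N i) = q powi (- weight N i)"
        using q0 by (simp add: power_int_add[symmetric])
      then show "(adj f * pi_qH N q (-2)) $$ (i,i) * q powi (1 * weight N i)
              = cnj (f $$ (i,i) * q powi (1 * weight N i))"
        using i by (simp add: diag_entry[OF af] adiag cq power_int_minus power_int_inverse mult.assoc)
    qed
    show "cnj (qint q N r f) = qint q N r (adj f * pi_qH N q (-2))"
    proof -
      have "cnj (\<Sum>i<N+1. f $$ (i,i) * q powi (1 * weight N i))
          = (\<Sum>i<N+1. (adj f * pi_qH N q (-2)) $$ (i,i) * q powi (1 * weight N i))"
        unfolding cnj_sum by (rule sum.cong) (simp_all only: e lessThan_iff)
      then show ?thesis
        unfolding qint_cnj[OF qn] unfolding qint_def tr_formula[OF f] tr_formula[OF afm] by simp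
    qed
  }
qed

end
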